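(* Let $Y$ be the Springer fibre, i.e. the variety of full flags $F_1\subset F_2\subset\dots\subset F_n=V$ ($\dim F_i=i$) with $NF_i\subset F_{i-1}$ for all $i$ (where $F_0=\{0\}$). (a) Let $I\subset\{1,\dots,n-1\}$, write $\{1,\dots,n\}\setminus I=\{j_1<\dots<j_r\}$ (so $j_r=n$), and let $U\subset Y$ be a subspace of type $I$. Then $N F_{j_l}\subset F_{j_{l-1}}$ for all $l=1,\dots,r$ (with $F_{j_0}:=\{0\}$) and every flag $(F_1\subset\dots\subset F_n)\in U$. (b) If $U\subset Y$ is a subspace of type $I$, then $I$ contains no two consecutive integers.
   Context: Fix integers $n\ge 2k\ge 0$. Let $V$ be an $n$-dimensional complex vector space with ordered basis $e_1,\dots,e_{n-k},f_1,\dots,f_k$ and $N:V\to V$ the nilpotent endomorphism with $Ne_i=e_{i-1}$, $Nf_i=f_{i-1}$, $e_0=f_0=0$ (Jordan type $(n-k,k)$). For $I\subset\{1,\dots,n-1\}$, a subspace of type $I$ is a set of full flags in $V$ of the form $\{(F_1\subset\dots\subset F_n): \dim F_i=i,\ F_j=G_j \text{ for all } j\in\{1,\dots,n\}\setminus I\}$ for some fixed subspaces $G_j$ (i.e. the $F_j$ with $j\notin I$ are fixed and those with $j\in I$ range over all possibilities). *)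

theory Defs
  imports "HOL-Analysis.Analysis" "HOL-Library.Function_Algebras"
begin

text \<open>The ambient space V is C^n, realised as the coordinate functions
  nat => complex supported on {0..<n}. Coordinate index i-1 corresponds to the
  basis vector e_i (1 <= i <= n-k), coordinate index n-k+i-1 to f_i (1 <= i <= k).\<close>

type_synonym vect = "nat \<Rightarrow> complex"

definition cscale :: "complex \<Rightarrow> vect \<Rightarrow> vect" where
  "cscale c v = (\<lambda>i. c * v i)"

definition ambient :: "nat \<Rightarrow> vect set" where
  "ambient n = {v. \<forall>i\<ge>n. v i = 0}"

text \<open>The nilpotent N: N e_i = e_{i-1}, N f_i = f_{i-1}, e_0 = f_0 = 0.\<close>
definition nilN :: "nat \<Rightarrow> nat \<Rightarrow> vect \<Rightarrow> vect" where
  "nilN n k v = (\<lambda>j. if j + 1 < n - k then v (j + 1)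
                     else if n - k \<le> j \<and> j + 1 < n then v (j + 1)
                     else 0)"

definition subsp_dim :: "nat \<Rightarrow> vect set \<Rightarrow> nat \<Rightarrow> bool" where
  "subsp_dim n S d \<longleftrightarrow> module.subspace cscale S \<and> S \<subseteq> ambient n
                         \<and> vector_space.dim cscale S = d"

text \<open>A full flag F_1 \<subseteq> ... \<subseteq> F_n = V, represented as a function on indices;
  normalised by F 0 = {0} and F j = V for j > n, so that flags correspond
  bijectively to such functions.\<close>
definition full_flag :: "nat \<Rightarrow> (nat \<Rightarrow> vect set) \<Rightarrow> bool" where
  "full_flag n F \<longleftrightarrow> (\<forall>i\<in>{1..n}. subsp_dim n (F i) i)
     \<and> (\<forall>i\<in>{1..<n}. F i \<subseteq> F (Suc i))
     \<and> F 0 = {0} \<and> (\<forall>j>n. F j = ambient n)"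

definition springer_fibre :: "nat \<Rightarrow> nat \<Rightarrow> (nat \<Rightarrow> vect set) set" where
  "springer_fibre n k = {F. full_flag n F \<and> (\<forall>i\<in>{1..n}. nilN n k ` F i \<subseteq> F (i - 1))}"

text \<open>A subspace of type I: the flags with F_j = G_j for j \<notin> I fixed
  (taken nonempty, i.e. the G_j form a partial flag).\<close>
definition subspace_of_type :: "nat \<Rightarrow> nat set \<Rightarrow> (nat \<Rightarrow> vect set) set \<Rightarrow> bool" where
  "subspace_of_type n I U \<longleftrightarrow>
     (\<exists>G. U \<noteq> {} \<and> U = {F. full_flag n F \<and> (\<forall>j\<in>{1..n} - I. F j = G j)})"

end

theory Submission imports Defs begin

lemma fun_sum_apply: "(sum f A) x = sum (\<lambda>a. f a x) A"
  by (induction A rule: infinite_finite_induct) auto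

interpretation cs: vector_space cscale
  by unfold_locales (auto simp: cscale_def fun_eq_iff algebra_simps)

definition delta :: "nat \<Rightarrow> vect" where "delta i = (\<lambda>j. if j = i then 1 else 0)"

lemma ambient_span: "ambient n \<subseteq> cs.span (delta ` {..<n})"
proof
  fix v assume v: "v \<in> ambient n"
  have "v = (\<Sum>i\<in>{..<n}. cscale (v i) (delta i))"
  proof (rule ext)
    fix x
    have "(\<Sum>i\<in>{..<n}. cscale (v i) (delta i)) x = (\<Sum>a<n. if x = a then v a else 0)"
      unfolding fun_sum_apply by (rule sum.cong) (auto simp: cscale_def delta_def)
    also have "\<dots> = v x" using v by (cases "x < n") (auto simp: sum.delta ambient_def)
    finally show "v x = (\<Sum>i\<in>{..<n}. cscale (v i) (delta i)) x" by simp
  qed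
  also have "\<dots> \<in> cs.span (delta ` {..<n})"
    by (intro cs.span_sum cs.span_scale cs.span_base) auto
  finally show "v \<in> cs.span (delta ` {..<n})" .
qed

lemma indep_fin: "cs.independent B \<Longrightarrow> B \<subseteq> ambient n \<Longrightarrow> finite B"
  using cs.independent_span_bound[of "delta ` {..<n}" B] ambient_span[of n] by auto

lemma basis_amb:
  assumes "S \<subseteq> ambient n"
  obtains B where "B \<subseteq> S" "cs.independent B" "S \<subseteq> cs.span B" "card B = cs.dim S" "finite B"
  using cs.basis_exists[of S] indep_fin assms by (metis order_trans)

lemma dim_mono:
  assumes "S \<subseteq> T" "T \<subseteq> ambient n"
  shows "cs.dim S \<le> cs.dim T"
proof -
  obtain B where "B \<subseteq> T" "cs.independent B" "T \<subseteq> cs.span B" "card B = cs.dim T" "finite B"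
    using basis_amb assms(2) by blast
  then show ?thesis using cs.dim_le_card[of S B] assms(1) by auto
qed

lemma gap:
  assumes A: "cs.subspace A" and B: "cs.subspace B" and AB: "A \<subseteq> B" and Ba: "B \<subseteq> ambient n"
    and v: "v \<in> B" "v \<notin> A"
  shows "\<exists>W. cs.subspace W \<and> A \<subseteq> W \<and> W \<subseteq> B \<and> v \<notin> W \<and> cs.dim W + 1 = cs.dim B"
proof -
  obtain BA where BA: "BA \<subseteq> A" "cs.independent BA" "A \<subseteq> cs.span BA" "card BA = cs.dim A"
    by (rule cs.basis_exists)
  have sBA: "cs.span BA \<subseteq> A" using BA(1) A by (rule cs.span_minimal)
  have vBA: "v \<notin> cs.span BA" using sBA v(2) by blast
  have ind: "cs.independent (insert v BA)" using cs.independent_insertI[OF vBA BA(2)] .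
  have ivB: "insert v BA \<subseteq> B" using BA(1) AB v(1) by blast
  obtain C where C: "insert v BA \<subseteq> C" "C \<subseteq> B" "cs.independent C" "B \<subseteq> cs.span C"
    using cs.maximal_independent_subset_extend[OF ivB ind] by blast
  have finC: "finite C" using indep_fin[OF C(3)] C(2) Ba by blast
  define W where "W = cs.span (C - {v})"
  have "cs.subspace W" unfolding W_def by (rule cs.subspace_span)
  moreover have "A \<subseteq> W"
  proof -
    have "BA \<subseteq> C - {v}" using C(1) vBA cs.span_base[of v BA] by blast
    then have "cs.span BA \<subseteq> W" unfolding W_def by (rule cs.span_mono)
    then show ?thesis using BA(3) by blast
  qed
  moreover have "W \<subseteq> B"
  proof -
    have "C - {v} \<subseteq> B" using C(2) by blast
    then show ?thesis unfolding W_def using B by (rule cs.span_minimal)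
  qed
  moreover have "v \<notin> W"
  proof -
    have e: "insert v (C - {v}) = C" using C(1) by blast
    have i1: "cs.independent (insert v (C - {v}))" unfolding e by (rule C(3))
    have nv: "v \<notin> C - {v}" by blast
    have "cs.independent (insert v (C - {v})) = (cs.independent (C - {v}) \<and> v \<notin> cs.span (C - {v}))"
      using cs.independent_insert[of v "C - {v}"] nv by (simp only: if_False)
    then show ?thesis using i1 unfolding W_def by blast
  qed
  moreover have "cs.dim W + 1 = cs.dim B"
  proof -
    have i2: "cs.independent (C - {v})" using C(3) by (rule cs.independent_mono) blast
    have "cs.dim W = card (C - {v})" unfolding W_def by (rule cs.dim_span_eq_card_independent[OF i2])
    moreover have "card C = cs.dim B" by (rule cs.basis_card_eq_dim[OF C(2) C(4) C(3)])
    moreover have "card (C - {v}) + 1 = card C"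
    proof -
      have "v \<in> C" using C(1) by blast
      then show ?thesis using finC card_Suc_Diff1[OF finC] by simp
    qed
    ultimately show ?thesis by simp
  qed
  ultimately show ?thesis by blast
qed

lemma nilN_sum: "nilN n k (sum h A) = sum (\<lambda>a. nilN n k (h a)) A"
  by (auto simp: nilN_def fun_eq_iff fun_sum_apply)
lemma nilN_scale: "nilN n k (cscale c v) = cscale c (nilN n k v)"
  by (auto simp: nilN_def fun_eq_iff cscale_def)
lemma nilN_diff: "nilN n k (v - w) = nilN n k v - nilN n k w"
  by (auto simp: nilN_def fun_eq_iff)

lemma ker_span:
  assumes "k < n" "v \<in> ambient n" "nilN n k v = 0"
  shows "v \<in> cs.span {delta 0, delta (n-k)}"
proof -
  have "v = cscale (v 0) (delta 0) + cscale (v (n-k)) (delta (n-k))"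
  proof (rule ext)
    fix j
    have z: "v j = 0" if "j \<noteq> 0" "j \<noteq> n - k"
    proof (cases "j < n")
      case True
      have "nilN n k v (j - 1) = 0" using assms(3) by simp
      then show ?thesis using that True by (auto simp: nilN_def split: if_splits)
    next
      case False then show ?thesis using assms(2) by (auto simp: ambient_def)
    qed
    show "v j = (cscale (v 0) (delta 0) + cscale (v (n-k)) (delta (n-k))) j"
      using z assms(1) by (auto simp: cscale_def delta_def)
  qed
  also have "\<dots> \<in> cs.span {delta 0, delta (n-k)}"
    by (intro cs.span_add cs.span_scale cs.span_base) auto
  finally show ?thesis .
qed

lemma rank_bound:
  assumes S: "cs.subspace S" "S \<subseteq> ambient n" and T: "T \<subseteq> ambient n"
    and ST: "nilN n k ` S \<subseteq> T" and kn: "k < n"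
  shows "cs.dim S \<le> cs.dim T + 2"
proof -
  define Y where "Y = nilN n k ` S"
  obtain BY where BY: "BY \<subseteq> Y" "cs.independent BY" "Y \<subseteq> cs.span BY" "card BY = cs.dim Y" "finite BY"
    using basis_amb[of Y n] ST T unfolding Y_def by blast
  have dY: "cs.dim Y \<le> cs.dim T" using dim_mono[of Y T n] ST T unfolding Y_def by blast
  define g where "g = (\<lambda>y. SOME x. x \<in> S \<and> nilN n k x = y)"
  have g: "g y \<in> S \<and> nilN n k (g y) = y" if "y \<in> BY" for y
  proof -
    have "\<exists>x. x \<in> S \<and> nilN n k x = y" using that BY(1) unfolding Y_def by blast
    then show ?thesis unfolding g_def by (rule someI_ex)
  qed
  define K where "K = {delta 0, delta (n-k)}"
  have "S \<subseteq> cs.span (K \<union> g ` BY)"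
  proof
    fix x assume x: "x \<in> S"
    have "nilN n k x \<in> cs.span BY" using x BY(3) unfolding Y_def by blast
    then obtain u where u: "nilN n k x = (\<Sum>y\<in>BY. cscale (u y) y)"
      using cs.span_finite[OF BY(5)] by auto
    define z where "z = (\<Sum>y\<in>BY. cscale (u y) (g y))"
    have zsp: "z \<in> cs.span (g ` BY)" unfolding z_def
      by (intro cs.span_sum cs.span_scale cs.span_base) auto
    have zS: "z \<in> S" using zsp cs.span_minimal[of "g ` BY" S] g S(1) by blast
    have "nilN n k z = nilN n k x" unfolding z_def u nilN_sum nilN_scale using g
      by (intro sum.cong) auto
    then have "nilN n k (x - z) = 0" by (simp add: nilN_diff)
    moreover have "x - z \<in> ambient n"
    proof -
      have "x \<in> ambient n" "z \<in> ambient n" using x zS S(2) by auto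
      then show ?thesis by (simp add: ambient_def)
    qed
    ultimately have "x - z \<in> cs.span K" using ker_span kn unfolding K_def by blast
    then have "x - z \<in> cs.span (K \<union> g ` BY)" using cs.span_mono[of K] by blast
    moreover have "z \<in> cs.span (K \<union> g ` BY)" using zsp cs.span_mono[of "g ` BY"] by blast
    ultimately have "(x - z) + z \<in> cs.span (K \<union> g ` BY)" by (rule cs.span_add)
    then show "x \<in> cs.span (K \<union> g ` BY)" by simp
  qed
  then have "cs.dim S \<le> card (K \<union> g ` BY)"
    using cs.dim_le_card[of S "K \<union> g ` BY"] BY(5) unfolding K_def by auto
  also have "\<dots> \<le> card K + card (g ` BY)" by (rule card_Un_le)
  also have "\<dots> \<le> 2 + card BY" unfolding K_def
    by (intro add_mono card_image_le BY(5)) (auto simp: card_insert_if)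
  finally show ?thesis using BY(4) dY by simp
qed

lemma flag_props:
  assumes "full_flag n F" "i \<le> n"
  shows "cs.subspace (F i) \<and> F i \<subseteq> ambient n \<and> cs.dim (F i) = i"
proof (cases "i = 0")
  case True
  have "F 0 = {0}" using assms(1) by (simp add: full_flag_def)
  moreover have "cs.dim {0::vect} = 0"
    by (metis cs.dim_span_eq_card_independent cs.independent_empty cs.span_empty card.empty)
  moreover have "cs.subspace {0::vect}" by (metis cs.span_empty cs.subspace_span)
  ultimately show ?thesis using True by (auto simp: ambient_def zero_fun_def)
next
  case False
  then show ?thesis using assms by (auto simp: full_flag_def subsp_dim_def)
qed

lemma flag_mono:
  assumes "full_flag n F" "a \<le> b" "b \<le> n"
  shows "F a \<subseteq> F b"
proof (cases "a = 0")
  case True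
  then show ?thesis using flag_props[OF assms(1) assms(3)] assms(1) cs.subspace_0
    by (auto simp: full_flag_def)
next
  case False
  show ?thesis using assms(2,3)
  proof (induction b rule: dec_induct)
    case base then show ?case by simp
  next
    case (step m)
    then have "F m \<subseteq> F (Suc m)" using assms(1) False by (auto simp: full_flag_def)
    then show ?case using step by auto
  qed
qed


lemma flag_upd1:
  assumes F: "full_flag n F" and m: "1 \<le> m" "m < n" and W: "subsp_dim n W m"
    and l: "F (m - 1) \<subseteq> W" and r: "W \<subseteq> F (Suc m)"
  shows "full_flag n (F(m := W))"
  unfolding full_flag_def
proof (intro conjI ballI allI impI)
  fix i assume "i \<in> {1..n}" then show "subsp_dim n ((F(m := W)) i) i"
    using F W by (auto simp: full_flag_def)
next
  fix i assume i: "i \<in> {1..<n}"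
  show "(F(m := W)) i \<subseteq> (F(m := W)) (Suc i)"
  proof (cases "i = m")
    case True then show ?thesis using r by simp
  next
    case False
    show ?thesis
    proof (cases "Suc i = m")
      case True then show ?thesis using l False by auto
    next
      case False2: False
      then show ?thesis using False F i by (auto simp: full_flag_def)
    qed
  qed
next
  show "(F(m := W)) 0 = {0}" using F m by (auto simp: full_flag_def)
next
  fix j assume "n < j" then show "(F(m := W)) j = ambient n" using F m by (auto simp: full_flag_def)
qed

lemma flag_upd2:
  assumes F: "full_flag n F" and m: "1 \<le> m" "Suc m < n"
    and W2: "subsp_dim n W2 m" and W1: "subsp_dim n W1 (Suc m)"
    and l: "F (m - 1) \<subseteq> W2" and c: "W2 \<subseteq> W1" and r: "W1 \<subseteq> F (Suc (Suc m))"
  shows "full_flag n (F(m := W2, Suc m := W1))"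
  unfolding full_flag_def
proof (intro conjI ballI allI impI)
  fix i assume "i \<in> {1..n}" then show "subsp_dim n ((F(m := W2, Suc m := W1)) i) i"
    using F W1 W2 by (auto simp: full_flag_def)
next
  fix i assume i: "i \<in> {1..<n}"
  consider "i = m" | "i = Suc m" | "Suc i = m" | "i \<noteq> m \<and> i \<noteq> Suc m \<and> Suc i \<noteq> m" by blast
  then show "(F(m := W2, Suc m := W1)) i \<subseteq> (F(m := W2, Suc m := W1)) (Suc i)"
  proof cases
    case 1 then show ?thesis using c by simp
  next
    case 2 then show ?thesis using r by simp
  next
    case 3 then show ?thesis using l by auto
  next
    case 4 then show ?thesis using F i by (auto simp: full_flag_def)
  qed
next
  show "(F(m := W2, Suc m := W1)) 0 = {0}" using F m by (auto simp: full_flag_def)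
next
  fix j assume "n < j" then show "(F(m := W2, Suc m := W1)) j = ambient n"
    using F m by (auto simp: full_flag_def)
qed

theorem lemma3p7:
  fixes n k :: nat and I :: "nat set" and U :: "(nat \<Rightarrow> vect set) set"
  assumes "2 * k \<le> n"
    and "I \<subseteq> {1..n - 1}"
    and "subspace_of_type n I U"
    and "U \<subseteq> springer_fibre n k"
  shows "(\<forall>F\<in>U. \<forall>j\<in>{1..n} - I.
            (if {j'\<in>{1..n} - I. j' < j} = {}
             then nilN n k ` F j \<subseteq> {0}
             else nilN n k ` F j \<subseteq> F (Max {j'\<in>{1..n} - I. j' < j})))
       \<and> (\<forall>i\<in>I. Suc i \<notin> I)"
proof -
  obtain G where Une: "U \<noteq> {}" and Ueq: "U = {F. full_flag n F \<and> (\<forall>j\<in>{1..n} - I. F j = G j)}"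
    using assms(3) unfolding subspace_of_type_def by blast
  have ff: "full_flag n F" if "F \<in> U" for F using that Ueq by blast
  have upd: "F' \<in> U" if "F \<in> U" "full_flag n F'" "\<And>j. j \<notin> I \<Longrightarrow> F' j = F j" for F F'
    using that Ueq by auto
  have spr: "nilN n k ` F i \<subseteq> F (i - 1)" if "F \<in> U" "i \<in> {1..n}" for F i
    using that assms(4) unfolding springer_fibre_def by blast
  have sd: "subsp_dim n W m" if "cs.subspace W" "W \<subseteq> ambient n" "cs.dim W = m" for W m
    using that unfolding subsp_dim_def by blast
  have core_a: "nilN n k ` F j \<subseteq> F (j - 2)" if F: "F \<in> U" and j: "j - 1 \<in> I" "2 \<le> j" "j \<le> n" for F j
  proof
    fix v assume v: "v \<in> nilN n k ` F j"
    show "v \<in> F (j - 2)"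
    proof (rule ccontr)
      assume nv: "v \<notin> F (j - 2)"
      have fF: "full_flag n F" using ff F .
      have v1: "v \<in> F (j - 1)" using spr[OF F, of j] j v by auto
      have m1: "F (j - 1) \<subseteq> F j" by (rule flag_mono[OF fF]) (use j in auto)
      have vj: "v \<in> F j" using v1 m1 by blast
      have Pj: "cs.subspace (F j) \<and> F j \<subseteq> ambient n \<and> cs.dim (F j) = j"
        by (rule flag_props[OF fF]) (use j in simp)
      have P2: "cs.subspace (F (j-2)) \<and> F (j-2) \<subseteq> ambient n \<and> cs.dim (F (j-2)) = j - 2"
        by (rule flag_props[OF fF]) (use j in simp)
      have m2: "F (j - 2) \<subseteq> F j" by (rule flag_mono[OF fF]) (use j in auto)
      obtain W where W: "cs.subspace W" "F (j-2) \<subseteq> W" "W \<subseteq> F j" "v \<notin> W" "cs.dim W + 1 = cs.dim (F j)"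
        using gap[of "F (j-2)" "F j" n v] Pj P2 m2 vj nv by blast
      define F' where "F' = F(j - 1 := W)"
      have "full_flag n F'" unfolding F'_def
      proof (rule flag_upd1[OF fF])
        show "1 \<le> j - 1" "j - 1 < n" using j assms(2) by auto
        show "subsp_dim n W (j - 1)" using W Pj sd[of W "j-1"] by auto
        have e1: "j - 1 - 1 = j - 2" by simp
        show "F (j - 1 - 1) \<subseteq> W" unfolding e1 using W by simp
        have e2: "Suc (j - 1) = j" using j by simp
        show "W \<subseteq> F (Suc (j - 1))" unfolding e2 using W by simp
      qed
      then have "F' \<in> U"
        by (rule upd[OF F]) (use j in \<open>auto simp: F'_def\<close>)
      then have "nilN n k ` F' j \<subseteq> F' (j - 1)" using spr[of F' j] j by simp
      moreover have "F' j = F j" "F' (j - 1) = W" using j by (auto simp: F'_def)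
      ultimately show False using v W(4) by auto
    qed
  qed
  have core_b: False if F: "F \<in> U" and i: "i \<in> I" "Suc i \<in> I" for F i
  proof -
    have fF: "full_flag n F" using ff F .
    have ib: "1 \<le> i" "i + 2 \<le> n" using i assms(2) by auto
    have kn: "k < n" using ib assms(1) by linarith
    have sub: "nilN n k ` F (i + 2) \<subseteq> F (i - 1)"
    proof
      fix v assume v: "v \<in> nilN n k ` F (i + 2)"
      show "v \<in> F (i - 1)"
      proof (rule ccontr)
        assume nv: "v \<notin> F (i - 1)"
        have v1: "v \<in> F (i + 1)" using spr[OF F, of "i+2"] ib v by auto
        have m1: "F (i + 1) \<subseteq> F (i + 2)" by (rule flag_mono[OF fF]) (use ib in auto)
        have vj: "v \<in> F (i + 2)" using v1 m1 by blast
        have Pj: "cs.subspace (F (i+2)) \<and> F (i+2) \<subseteq> ambient n \<and> cs.dim (F (i+2)) = i + 2"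
          by (rule flag_props[OF fF]) (use ib in simp)
        have P2: "cs.subspace (F (i-1)) \<and> F (i-1) \<subseteq> ambient n \<and> cs.dim (F (i-1)) = i - 1"
          by (rule flag_props[OF fF]) (use ib in simp)
        have m2: "F (i - 1) \<subseteq> F (i + 2)" by (rule flag_mono[OF fF]) (use ib in auto)
        obtain W1 where W1: "cs.subspace W1" "F (i-1) \<subseteq> W1" "W1 \<subseteq> F (i+2)" "v \<notin> W1"
            "cs.dim W1 + 1 = cs.dim (F (i+2))"
          using gap[of "F (i-1)" "F (i+2)" n v] Pj P2 m2 vj nv by blast
        have W1a: "W1 \<subseteq> ambient n" using W1(3) Pj by blast
        have dW1: "cs.dim W1 = i + 1" using W1(5) Pj by simp
        obtain u where u: "u \<in> W1" "u \<notin> F (i - 1)"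
        proof (rule ccontr)
          assume "\<not> thesis"
          then have "W1 \<subseteq> F (i - 1)" using that by blast
          then have "cs.dim W1 \<le> cs.dim (F (i - 1))" using dim_mono P2 by blast
          then show False using dW1 P2 by simp
        qed
        obtain W2 where W2: "cs.subspace W2" "F (i-1) \<subseteq> W2" "W2 \<subseteq> W1" "u \<notin> W2"
            "cs.dim W2 + 1 = cs.dim W1"
          using gap[of "F (i-1)" W1 n u] P2 W1(1,2) W1a u by blast
        have W2a: "W2 \<subseteq> ambient n" using W2(3) W1a by blast
        define F' where "F' = F(i := W2, Suc i := W1)"
        have "full_flag n F'" unfolding F'_def
        proof (rule flag_upd2[OF fF])
          show "1 \<le> i" "Suc i < n" using ib by auto
          show "subsp_dim n W2 i" using W2 W2a dW1 sd[of W2 i] by auto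
          show "subsp_dim n W1 (Suc i)" using W1(1) W1a dW1 sd[of W1 "Suc i"] by auto
          show "F (i - 1) \<subseteq> W2" "W2 \<subseteq> W1" using W2 by auto
          have e2: "Suc (Suc i) = i + 2" by simp
          show "W1 \<subseteq> F (Suc (Suc i))" unfolding e2 using W1 by simp
        qed
        then have "F' \<in> U"
          by (rule upd[OF F]) (use i in \<open>auto simp: F'_def\<close>)
        then have "nilN n k ` F' (i + 2) \<subseteq> F' (i + 2 - 1)" using spr[of F' "i+2"] ib by simp
        moreover have "F' (i + 2) = F (i + 2)" "F' (i + 2 - 1) = W1" by (auto simp: F'_def)
        ultimately show False using v W1(4) by auto
      qed
    qed
    have Pj: "cs.subspace (F (i+2)) \<and> F (i+2) \<subseteq> ambient n \<and> cs.dim (F (i+2)) = i + 2"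
      by (rule flag_props[OF fF]) (use ib in simp)
    have P2: "cs.subspace (F (i-1)) \<and> F (i-1) \<subseteq> ambient n \<and> cs.dim (F (i-1)) = i - 1"
      by (rule flag_props[OF fF]) (use ib in simp)
    have "cs.dim (F (i + 2)) \<le> cs.dim (F (i - 1)) + 2"
      using rank_bound[of "F (i+2)" n "F (i-1)" k] Pj P2 sub kn by blast
    then show False using Pj P2 ib by simp
  qed
  have B: "\<forall>i\<in>I. Suc i \<notin> I"
  proof (intro ballI notI)
    fix i assume "i \<in> I" "Suc i \<in> I"
    obtain F where "F \<in> U" using Une by blast
    then show False using core_b \<open>i \<in> I\<close> \<open>Suc i \<in> I\<close> by blast
  qed
  have A: "\<forall>F\<in>U. \<forall>j\<in>{1..n} - I.
            (if {j'\<in>{1..n} - I. j' < j} = {}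
             then nilN n k ` F j \<subseteq> {0}
             else nilN n k ` F j \<subseteq> F (Max {j'\<in>{1..n} - I. j' < j}))"
  proof (intro ballI)
    fix F j assume F: "F \<in> U" and j: "j \<in> {1..n} - I"
    have fF: "full_flag n F" using ff F .
    have F0: "F 0 = {0}" using fF by (simp add: full_flag_def)
    define P where "P = {j'\<in>{1..n} - I. j' < j}"
    have finP: "finite P" unfolding P_def by auto
    consider "j = 1" | "2 \<le> j" "j - 1 \<notin> I" | "2 \<le> j" "j - 1 \<in> I" using j by force
    then have "if P = {} then nilN n k ` F j \<subseteq> {0} else nilN n k ` F j \<subseteq> F (Max P)"
    proof cases
      case 1
      then have "P = {}" unfolding P_def by auto
      moreover have "nilN n k ` F j \<subseteq> F (j - 1)" using spr[OF F, of j] j by auto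
      ultimately show ?thesis using 1 F0 by simp
    next
      case 2
      have jP: "j - 1 \<in> P" unfolding P_def using 2 j by auto
      have "Max P = j - 1"
        by (rule Max_eqI[OF finP]) (use jP in \<open>auto simp: P_def\<close>)
      moreover have "nilN n k ` F j \<subseteq> F (j - 1)" using spr[OF F, of j] j by auto
      ultimately show ?thesis using jP by auto
    next
      case 3
      have ca: "nilN n k ` F j \<subseteq> F (j - 2)" using core_a[OF F 3(2) 3(1)] j by auto
      show ?thesis
      proof (cases "j = 2")
        case True
        have "P = {}"
        proof (rule ccontr)
          assume "P \<noteq> {}"
          then obtain y where y: "y \<in> P" by blast
          then have "1 \<le> y" "y < 2" "y \<notin> I" unfolding P_def using True by auto
          then have "y = j - 1" using True by linarith
          then show False using \<open>y \<notin> I\<close> 3 by simp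
        qed
        then show ?thesis using ca True F0 by simp
      next
        case False
        have n2: "j - 2 \<notin> I"
        proof
          assume "j - 2 \<in> I"
          moreover have "Suc (j - 2) = j - 1" using 3 False by linarith
          ultimately show False using B 3(2) by metis
        qed
        have jP: "j - 2 \<in> P" unfolding P_def using 3 j False n2 by auto
        have "Max P = j - 2"
        proof (rule Max_eqI[OF finP])
          fix y assume "y \<in> P"
          then have "y < j" "y \<noteq> j - 1" "y \<notin> I" using 3 unfolding P_def by auto
          then show "y \<le> j - 2" by linarith
        qed (rule jP)
        then show ?thesis using ca jP by auto
      qed
    qed
    then show "if {j'\<in>{1..n} - I. j' < j} = {} then nilN n k ` F j \<subseteq> {0}
             else nilN n k ` F j \<subseteq> F (Max {j'\<in>{1..n} - I. j' < j})"
      unfolding P_def .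
  qed
  show ?thesis using A B by blast
qed

end
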